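(* Let $\mu\in\mathcal{F}(\mathbb{X})$, let $X_1,X_2,\dots$ be i.i.d. with law $\mu$, and let $\hat\mu_n$ be the empirical measure. Then almost surely $\hat\mu_n\ll\mu$ and $H(\hat\mu_n)<\infty$, $D(\hat\mu_n\|\mu)<\infty$, and for every $n\ge1$ and every $\epsilon>0$: $$\mathbb{P}^n_\mu\big(D(\hat\mu_n\|\mu)>\epsilon\big)\le 2^{|A_\mu|+1}\exp\Big(-\frac{2\mathbf{m}_\mu^2\,n\epsilon^2}{(\log e)^2}\Big),$$ $$\mathbb{P}^n_\mu\big(|H(\hat\mu_n)-H(\mu)|>\epsilon\big)\le 2^{|A_\mu|+1}\exp\Big(-\frac{2n\epsilon^2}{(\mathbf{M}_\mu+\log e/\mathbf{m}_\mu)^2}\Big),$$ $$\mathbb{P}^n_\mu\big(D(\mu\|\hat\mu_n)>\epsilon\big)\le 2^{|A_\mu|+1}\Big[\exp\Big(-\frac{2n\epsilon^2}{(\log e)^2(1/\mathbf{m}_\mu+1)^2}\Big)+\exp(-n\mathbf{m}_\mu^2)\Big].$$ Moreover, almost surely $D(\mu\|\hat\mu_n)<\infty$ for all sufficiently large $n$.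
   Context: $\mathbb{X}$ is a countably infinite set and $\mathcal{P}(\mathbb{X})$ the set of probability measures on all subsets of $\mathbb{X}$. For $\mu\in\mathcal{P}(\mathbb{X})$, $f_\mu(x)=\mu(\{x\})$ is its pmf and $A_\mu=\{x:f_\mu(x)>0\}$ its support; $\mathcal{F}(\mathbb{X})$ is the set of $\mu$ with $|A_\mu|<\infty$. For $\mu\in\mathcal{F}(\mathbb{X})$, $\mathbf{m}_\mu=\min_{x\in A_\mu}f_\mu(x)$ and $\mathbf{M}_\mu=\log(1/\mathbf{m}_\mu)$. $\log$ is the logarithm to a fixed base $b>1$ (so $\log e=1/\ln b$). Entropy: $H(\mu)=-\sum_{x\in A_\mu}f_\mu(x)\log f_\mu(x)$. I-divergence: $D(\mu\|\nu)=\sum_{x\in A_\mu}f_\mu(x)\log\frac{f_\mu(x)}{f_\nu(x)}$ if $\mu\ll\nu$, and $+\infty$ otherwise. Given i.i.d. $X_1,X_2,\dots\sim\mu$, $\mathbb{P}_\mu$ is the law of the whole sequence and $\mathbb{P}^n_\mu$ that of $(X_1,\dots,X_n)$; the empirical measure is $\hat\mu_n(A)=\frac1n\sum_{k=1}^n\mathbb{1}_A(X_k)$ for $A\subset\mathbb{X}$. *)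

theory Defs
  imports "HOL-Probability.Probability"
begin

text \<open>Logarithms are to a fixed base b > 1 (log b).  Probability measures on the
countable type 'a are pmfs; support A_mu = set_pmf mu, pmf mu x = f_mu(x).\<close>

definition entropy :: "real \<Rightarrow> 'a pmf \<Rightarrow> ereal" where
  "entropy b p = enn2ereal (\<integral>\<^sup>+ x. ennreal (- pmf p x * log b (pmf p x)) \<partial>count_space (set_pmf p))"

text \<open>The sum is taken as (positive part) - (negative part); the
  negative part is always finite when p << q, so this is the usual value in [0, infinity].\<close>
definition idiv :: "real \<Rightarrow> 'a pmf \<Rightarrow> 'a pmf \<Rightarrow> ereal" where
  "idiv b p q =
     (if set_pmf p \<subseteq> set_pmf q then
        enn2ereal (\<integral>\<^sup>+ x. ennreal (pmf p x * log b (pmf p x / pmf q x)) \<partial>count_space (set_pmf p))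
        - enn2ereal (\<integral>\<^sup>+ x. ennreal (- (pmf p x * log b (pmf p x / pmf q x))) \<partial>count_space (set_pmf p))
      else \<infinity>)"

definition min_mass :: "'a pmf \<Rightarrow> real" where
  "min_mass p = Min (pmf p ` set_pmf p)"

definition Max_log :: "real \<Rightarrow> 'a pmf \<Rightarrow> real" where
  "Max_log b p = log b (1 / min_mass p)"

text \<open>Empirical measure of the first n sample points (n \<ge> 1):
  pmf (empirical n x) y = card {k<n. x k = y} / n.\<close>
definition empirical :: "nat \<Rightarrow> (nat \<Rightarrow> 'a) \<Rightarrow> 'a pmf" where
  "empirical n x = map_pmf x (pmf_of_set {..<n})"

text \<open>Law P_mu of the whole i.i.d. sequence X_1, X_2, ... (indexed from 0).\<close>
definition iid_seq :: "'a pmf \<Rightarrow> (nat \<Rightarrow> 'a) measure" where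
  "iid_seq p = PiM UNIV (\<lambda>_. measure_pmf p)"

text \<open>Law P^n_mu of (X_1, ..., X_n) (coordinates \<ge> n are fixed to a dummy value).\<close>
definition iid_n :: "nat \<Rightarrow> 'a pmf \<Rightarrow> (nat \<Rightarrow> 'a) pmf" where
  "iid_n n p = Pi_pmf {..<n} undefined (\<lambda>_. p)"

end

theory Submission
  imports Defs
begin



lemma pmf_empirical:
  assumes "n > 0"
  shows "measure_pmf.prob (empirical n \<omega>) B = real (card {k\<in>{..<n}. \<omega> k \<in> B}) / real n"
proof -
  have "measure_pmf.prob (empirical n \<omega>) B = measure_pmf.prob (pmf_of_set {..<n}) (\<omega> -` B)"
    by (simp add: empirical_def measure_map_pmf)
  also have "\<dots> = real (card ({..<n} \<inter> \<omega> -` B)) / real n"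
    using assms by (subst measure_pmf_of_set) auto
  also have "{..<n} \<inter> \<omega> -` B = {k\<in>{..<n}. \<omega> k \<in> B}" by auto
  finally show ?thesis .
qed

lemma set_pmf_empirical:
  assumes "n > 0"
  shows "set_pmf (empirical n \<omega>) = \<omega> ` {..<n}"
  using assms by (simp add: empirical_def, subst set_pmf_of_set) auto

lemma binomial_iid:
  fixes \<mu> :: "'a pmf"
  shows "map_pmf (\<lambda>\<omega>. card {k\<in>{..<n}. \<omega> k \<in> B}) (iid_n n \<mu>)
         = binomial_pmf n (measure_pmf.prob \<mu> B)"
proof -
  define p where "p = measure_pmf.prob \<mu> B"
  have p: "p \<in> {0..1}" by (auto simp: p_def)
  have bern: "bernoulli_pmf p = map_pmf (\<lambda>x. x \<in> B) \<mu>"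
  proof (rule pmf_eqI)
    fix t :: bool
    show "pmf (bernoulli_pmf p) t = pmf (map_pmf (\<lambda>x. x \<in> B) \<mu>) t"
    proof (cases t)
      case True
      then show ?thesis using p by (simp add: pmf_map p_def vimage_def)
    next
      case False
      have "measure_pmf.prob \<mu> {x. x \<notin> B} = 1 - p"
        unfolding p_def
        using measure_pmf.prob_compl[of B \<mu>] by (simp add: Compl_eq_Diff_UNIV[symmetric] Collect_neg_eq)
      then show ?thesis using p False by (simp add: pmf_map vimage_def)
    qed
  qed
  have "binomial_pmf n p = map_pmf (\<lambda>f. card {x\<in>{..<n}. f x})
           (Pi_pmf {..<n} (undefined \<in> B) (\<lambda>_. bernoulli_pmf p))"
    by (rule binomial_pmf_altdef') (use p in auto)
  also have "Pi_pmf {..<n} (undefined \<in> B) (\<lambda>_. bernoulli_pmf p)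
       = map_pmf (\<lambda>h. (\<lambda>x. x \<in> B) \<circ> h) (iid_n n \<mu>)"
    unfolding bern iid_n_def by (rule Pi_pmf_map) auto
  finally show ?thesis by (simp add: p_def map_pmf_comp o_def)
qed

lemma hoeffding_emp:
  fixes \<mu> :: "'a pmf"
  assumes "n > 0" "\<delta> \<ge> 0"
  shows "measure_pmf.prob (iid_n n \<mu>)
           {\<omega>. measure_pmf.prob (empirical n \<omega>) B \<ge> measure_pmf.prob \<mu> B + \<delta>}
         \<le> exp (- 2 * real n * \<delta>\<^sup>2)"
proof -
  define p where "p = measure_pmf.prob \<mu> B"
  interpret binomial_distribution n p by unfold_locales (auto simp: p_def)
  have "measure_pmf.prob (iid_n n \<mu>)
           {\<omega>. measure_pmf.prob (empirical n \<omega>) B \<ge> p + \<delta>}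
        = measure_pmf.prob (map_pmf (\<lambda>\<omega>. card {k\<in>{..<n}. \<omega> k \<in> B}) (iid_n n \<mu>))
            {x. real x / real n \<ge> p + \<delta>}"
    using assms(1) by (simp add: measure_map_pmf vimage_def pmf_empirical)
  also have "\<dots> \<le> exp (- 2 * real n * \<delta>\<^sup>2)"
    unfolding binomial_iid p_def[symmetric] using prob_ge'[OF assms(1) assms(2)] by simp
  finally show ?thesis by (simp add: p_def)
qed




lemma union_bound:
  fixes \<mu> :: "'a pmf"
  assumes "finite A" "n > 0" "\<delta> \<ge> 0"
  shows "measure_pmf.prob (iid_n n \<mu>)
           {\<omega>. (\<Sum>x\<in>A. max 0 (pmf (empirical n \<omega>) x - pmf \<mu> x)) > \<delta>}
         \<le> 2 ^ card A * exp (- 2 * real n * \<delta>\<^sup>2)"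
proof -
  let ?E = "\<lambda>B. {\<omega>. measure_pmf.prob (empirical n \<omega>) B \<ge> measure_pmf.prob \<mu> B + \<delta>}"
  have sub: "{\<omega>. (\<Sum>x\<in>A. max 0 (pmf (empirical n \<omega>) x - pmf \<mu> x)) > \<delta>} \<subseteq> (\<Union>B\<in>Pow A. ?E B)"
  proof
    fix \<omega> assume "\<omega> \<in> {\<omega>. (\<Sum>x\<in>A. max 0 (pmf (empirical n \<omega>) x - pmf \<mu> x)) > \<delta>}"
    then have h: "(\<Sum>x\<in>A. max 0 (pmf (empirical n \<omega>) x - pmf \<mu> x)) > \<delta>" by simp
    define B where "B = {x\<in>A. pmf (empirical n \<omega>) x > pmf \<mu> x}"
    have fB: "finite B" using assms(1) by (simp add: B_def)
    have "(\<Sum>x\<in>A. max 0 (pmf (empirical n \<omega>) x - pmf \<mu> x))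
          = (\<Sum>x\<in>B. pmf (empirical n \<omega>) x - pmf \<mu> x)"
    proof -
      have "(\<Sum>x\<in>A. max 0 (pmf (empirical n \<omega>) x - pmf \<mu> x))
           = (\<Sum>x\<in>B. max 0 (pmf (empirical n \<omega>) x - pmf \<mu> x))"
        unfolding B_def by (rule sum.mono_neutral_right) (use assms(1) in auto)
      also have "\<dots> = (\<Sum>x\<in>B. pmf (empirical n \<omega>) x - pmf \<mu> x)"
        by (rule sum.cong) (auto simp: B_def)
      finally show ?thesis .
    qed
    also have "\<dots> = measure_pmf.prob (empirical n \<omega>) B - measure_pmf.prob \<mu> B"
      using fB by (simp add: measure_measure_pmf_finite sum_subtractf)
    finally have "\<omega> \<in> ?E B" using h by simp
    moreover have "B \<in> Pow A" by (auto simp: B_def)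
    ultimately show "\<omega> \<in> (\<Union>B\<in>Pow A. ?E B)" by blast
  qed
  have "measure_pmf.prob (iid_n n \<mu>)
           {\<omega>. (\<Sum>x\<in>A. max 0 (pmf (empirical n \<omega>) x - pmf \<mu> x)) > \<delta>}
        \<le> measure_pmf.prob (iid_n n \<mu>) (\<Union>B\<in>Pow A. ?E B)"
    by (rule measure_pmf.finite_measure_mono[OF sub]) simp
  also have "\<dots> \<le> (\<Sum>B\<in>Pow A. measure_pmf.prob (iid_n n \<mu>) (?E B))"
    by (rule measure_pmf.finite_measure_subadditive_finite) (use assms(1) in auto)
  also have "\<dots> \<le> (\<Sum>B\<in>Pow A. exp (- 2 * real n * \<delta>\<^sup>2))"
    by (rule sum_mono, rule hoeffding_emp) (use assms in auto)
  also have "\<dots> = 2 ^ card A * exp (- 2 * real n * \<delta>\<^sup>2)"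
    using assms(1) by (simp add: card_Pow)
  finally show ?thesis .
qed



lemma arith2:
  fixes t m :: real
  assumes "0 \<le> t" "2 * t\<^sup>2 \<le> m\<^sup>2" "0 < m" "m \<le> 1/2"
  shows "t / (m - t) + t / (m + t) \<le> 1 / m + 1"
proof -
  have m2: "m\<^sup>2 > 0" using assms(3) by simp
  have tt: "t\<^sup>2 < m\<^sup>2" using assms(2) m2 by linarith
  have tm: "t < m" by (rule power_less_imp_less_base[OF tt]) (use assms(3) in simp)
  have sq43: "(4 * t)\<^sup>2 \<le> (3 * m)\<^sup>2" using assms(2) m2 by (simp add: power_mult_distrib, linarith)
  have t4: "4 * t \<le> 3 * m" by (rule power2_le_imp_le[OF sq43]) (use assms(3) in simp)
  have e: "t / (m - t) + t / (m + t) = 2 * m * t / (m\<^sup>2 - t\<^sup>2)"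
    using tm assms(1) by (simp add: field_simps power2_eq_square)
  have "2 * m * t / (m\<^sup>2 - t\<^sup>2) \<le> 2 * m * t / (m\<^sup>2 / 2)"
    using assms tt by (intro divide_left_mono) auto
  also have "\<dots> = 4 * t / m" using assms(3) by (simp add: field_simps power2_eq_square)
  also have "\<dots> \<le> 3" using t4 assms(3) by (simp add: field_simps)
  also have "3 \<le> 1 / m + 1" using assms(3,4) by (simp add: field_simps)
  finally show ?thesis using e by simp
qed



lemma logb_le_L:
  assumes "b > 1" "x > 0"
  shows "log b x \<le> log b (exp 1) * (x - 1)"
proof -
  have "ln x \<le> x - 1" using assms(2) by (rule ln_le_minus_one)
  moreover have "ln b > 0" using assms(1) by simp
  ultimately show ?thesis by (simp add: log_def divide_right_mono)
qed

locale det =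
  fixes A :: "'a set" and p q :: "'a \<Rightarrow> real" and m b :: real
  assumes fin: "finite A" and qpos: "\<And>x. x \<in> A \<Longrightarrow> q x > 0"
    and sq: "sum q A = 1" and pnn: "\<And>x. x \<in> A \<Longrightarrow> p x \<ge> 0"
    and sp: "sum p A = 1" and mle: "\<And>x. x \<in> A \<Longrightarrow> m \<le> q x" and mpos: "m > 0"
    and b: "b > 1"

context det
begin

definition "TT = (\<Sum>x\<in>A. max 0 (p x - q x))"

lemma TT_alt: "TT = (\<Sum>x\<in>A. max 0 (q x - p x))"
proof -
  have "(\<Sum>x\<in>A. max 0 (p x - q x)) - (\<Sum>x\<in>A. max 0 (q x - p x)) = (\<Sum>x\<in>A. p x - q x)"
    by (simp add: sum_subtractf[symmetric]) (rule sum.cong, auto)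
  also have "\<dots> = 0" using sp sq by (simp add: sum_subtractf)
  finally show ?thesis by (simp add: TT_def)
qed

lemma TT_nn: "TT \<ge> 0"
  unfolding TT_def by (rule sum_nonneg) auto

lemma dev1: "x \<in> A \<Longrightarrow> p x - q x \<le> TT"
proof -
  assume x: "x \<in> A"
  have "max 0 (p x - q x) \<le> TT" unfolding TT_def
    by (rule member_le_sum[OF x]) (auto simp: fin)
  then show ?thesis by simp
qed

lemma dev2: "x \<in> A \<Longrightarrow> q x - p x \<le> TT"
proof -
  assume x: "x \<in> A"
  have "max 0 (q x - p x) \<le> TT" unfolding TT_alt
    by (rule member_le_sum[OF x]) (auto simp: fin)
  then show ?thesis by simp
qed

lemma Ane: "A \<noteq> {}" using sq by auto

lemma TT_le: "TT \<le> 1 - m"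
proof -
  obtain x0 where x0: "x0 \<in> A" "p x0 \<ge> q x0"
  proof (rule ccontr)
    assume "\<not> thesis"
    with that have "\<forall>x\<in>A. p x < q x" by force
    then have "sum p A < sum q A" using fin Ane by (intro sum_strict_mono) auto
    with sp sq show False by simp
  qed
  have "TT = (\<Sum>x\<in>A - {x0}. max 0 (q x - p x))"
    unfolding TT_alt using x0 fin by (subst sum.remove[OF fin x0(1)]) auto
  also have "\<dots> \<le> (\<Sum>x\<in>A - {x0}. q x)"
    by (rule sum_mono) (use pnn qpos in force)
  also have "\<dots> = 1 - q x0" using sum.remove[OF fin x0(1), of q] sq by simp
  finally show ?thesis using mle[OF x0(1)] by simp
qed

definition "D1 = (\<Sum>x\<in>A. p x * log b (p x / q x))"

lemma term1: "x \<in> A \<Longrightarrow> p x * log b (p x / q x) \<le> log b (exp 1) * ((p x - q x)\<^sup>2 / q x + (p x - q x))"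
proof -
  assume x: "x \<in> A"
  note qx = qpos[OF x]
  show ?thesis
  proof (cases "p x = 0")
    case True then show ?thesis using qx by (simp add: power2_eq_square)
  next
    case False
    then have px: "p x > 0" using pnn[OF x] by simp
    have "p x * log b (p x / q x) \<le> p x * (log b (exp 1) * (p x / q x - 1))"
      using logb_le_L[OF b, of "p x / q x"] px qx by (intro mult_left_mono) auto
    also have "\<dots> = log b (exp 1) * ((p x - q x)\<^sup>2 / q x + (p x - q x))"
      using qx by (simp add: field_simps power2_eq_square)
    finally show ?thesis .
  qed
qed

lemma L_pos: "log b (exp 1) > 0" using b by simp

lemma chi1: "x \<in> A \<Longrightarrow> (p x - q x)\<^sup>2 / q x \<le> max 0 (p x - q x) * (TT / m) + max 0 (q x - p x)"
proof -
  assume x: "x \<in> A"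
  note qx = qpos[OF x] and d1 = dev1[OF x] and d2 = dev2[OF x] and mq = mle[OF x] and pn = pnn[OF x]
  show ?thesis
  proof (cases "p x \<ge> q x")
    case True
    have "(p x - q x)\<^sup>2 / q x = (p x - q x) * ((p x - q x) / q x)" by (simp add: power2_eq_square)
    also have "\<dots> \<le> (p x - q x) * (TT / m)"
      using True d1 qx mq mpos TT_nn by (intro mult_left_mono frac_le) auto
    finally show ?thesis using True by simp
  next
    case False
    have "(p x - q x)\<^sup>2 / q x = (q x - p x) * ((q x - p x) / q x)" by (simp add: power2_eq_square algebra_simps)
    also have "\<dots> \<le> (q x - p x) * 1"
      using False qx pn by (intro mult_left_mono) auto
    finally show ?thesis using False TT_nn mpos by simp
  qed
qed

lemma chisum1: "(\<Sum>x\<in>A. (p x - q x)\<^sup>2 / q x) \<le> TT / m"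
proof -
  have "(\<Sum>x\<in>A. (p x - q x)\<^sup>2 / q x) \<le> (\<Sum>x\<in>A. max 0 (p x - q x) * (TT / m) + max 0 (q x - p x))"
    by (rule sum_mono, rule chi1)
  also have "\<dots> = TT * (TT / m) + TT"
    by (subst sum.distrib, subst sum_distrib_right[symmetric]) (simp only: TT_def[symmetric] TT_alt[symmetric])
  also have "\<dots> \<le> TT / m"
  proof -
    have h: "TT * (TT + m) \<le> TT * 1" using TT_le TT_nn by (intro mult_left_mono) auto
    have "TT * (TT / m) + TT = TT * (TT + m) / m" using mpos by (simp add: field_simps)
    also have "\<dots> \<le> TT * 1 / m" using h mpos by (intro divide_right_mono) auto
    finally show ?thesis by simp
  qed
  finally show ?thesis .
qed

lemma D1_le: "D1 \<le> log b (exp 1) * (TT / m)"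
proof -
  have "D1 \<le> (\<Sum>x\<in>A. log b (exp 1) * ((p x - q x)\<^sup>2 / q x + (p x - q x)))"
    unfolding D1_def by (rule sum_mono, rule term1)
  also have "\<dots> = log b (exp 1) * ((\<Sum>x\<in>A. (p x - q x)\<^sup>2 / q x) + (\<Sum>x\<in>A. p x - q x))"
    by (simp add: sum_distrib_left sum.distrib distrib_left)
  also have "(\<Sum>x\<in>A. p x - q x) = 0" using sp sq by (simp add: sum_subtractf)
  finally have "D1 \<le> log b (exp 1) * (\<Sum>x\<in>A. (p x - q x)\<^sup>2 / q x)" by simp
  also have "\<dots> \<le> log b (exp 1) * (TT / m)"
    using chisum1 L_pos by (intro mult_left_mono) auto
  finally show ?thesis .
qed

lemma alg1: "(P::real) > 0 \<Longrightarrow> P * (- (L * (Q / P - 1))) = L * (P - Q)"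
  by (simp add: field_simps)

lemma D1_ge: "D1 \<ge> 0"
proof -
  have "(\<Sum>x\<in>A. log b (exp 1) * (p x - q x)) \<le> D1"
    unfolding D1_def
  proof (rule sum_mono)
    fix x assume x: "x \<in> A"
    note qx = qpos[OF x]
    show "log b (exp 1) * (p x - q x) \<le> p x * log b (p x / q x)"
    proof (cases "p x = 0")
      case True then show ?thesis using qx L_pos by simp
    next
      case False
      then have px: "p x > 0" using pnn[OF x] by simp
      have "log b (p x / q x) = - log b (q x / p x)"
        using px qx b by (simp add: log_divide)
      moreover have "log b (q x / p x) \<le> log b (exp 1) * (q x / p x - 1)"
        using logb_le_L[OF b, of "q x / p x"] px qx by auto
      ultimately have "p x * log b (p x / q x) \<ge> p x * (- (log b (exp 1) * (q x / p x - 1)))"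
        using px by (intro mult_left_mono) auto
      moreover have "p x * (- (log b (exp 1) * (q x / p x - 1))) = log b (exp 1) * (p x - q x)"
        using px alg1 by blast
      ultimately show ?thesis by simp
    qed
  qed
  moreover have "(\<Sum>x\<in>A. log b (exp 1) * (p x - q x)) = 0"
    using sp sq by (simp only: sum_distrib_left[symmetric] sum_subtractf) simp
  ultimately show ?thesis by simp
qed

definition "Hf f = (\<Sum>x\<in>A. - f x * log b (f x))"

lemma Hdiff: "Hf q - Hf p = D1 - (\<Sum>x\<in>A. (p x - q x) * log b (1 / q x))"
proof -
  have "Hf q - Hf p = (\<Sum>x\<in>A. p x * log b (p x / q x) - (p x - q x) * log b (1 / q x))"
    unfolding Hf_def sum_subtractf[symmetric]
  proof (rule sum.cong[OF refl])
    fix x assume x: "x \<in> A"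
    note qx = qpos[OF x]
    show "- q x * log b (q x) - - p x * log b (p x) = p x * log b (p x / q x) - (p x - q x) * log b (1 / q x)"
    proof (cases "p x = 0")
      case True then show ?thesis using qx b by (simp add: log_divide)
    next
      case False
      then have px: "p x > 0" using pnn[OF x] by simp
      then show ?thesis using qx b by (simp add: log_divide algebra_simps)
    qed
  qed
  then show ?thesis by (simp add: D1_def sum_subtractf)
qed

lemma q_le1: "x \<in> A \<Longrightarrow> q x \<le> 1"
  using member_le_sum[of x A q] fin qpos sq by fastforce

lemma logq_bounds: "x \<in> A \<Longrightarrow> 0 \<le> log b (1 / q x) \<and> log b (1 / q x) \<le> log b (1 / m)"
proof -
  assume x: "x \<in> A"
  note qx = qpos[OF x]
  have "1 \<le> 1 / q x" using q_le1[OF x] qx by simp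
  then have "0 \<le> log b (1 / q x)" using b qx by (subst zero_le_log_cancel_iff) auto
  moreover have "1 / q x \<le> 1 / m" using mle[OF x] mpos by (simp add: frac_le)
  then have "log b (1 / q x) \<le> log b (1 / m)" using b qx mpos by simp
  ultimately show ?thesis by simp
qed

lemma lin_bound: "\<bar>\<Sum>x\<in>A. (p x - q x) * log b (1 / q x)\<bar> \<le> log b (1 / m) * TT"
proof -
  let ?M = "log b (1 / m)"
  have up: "(\<Sum>x\<in>A. (p x - q x) * log b (1 / q x)) \<le> (\<Sum>x\<in>A. max 0 (p x - q x) * ?M)"
  proof (rule sum_mono)
    fix x assume x: "x \<in> A"
    from logq_bounds[OF x] show "(p x - q x) * log b (1 / q x) \<le> max 0 (p x - q x) * ?M"
      by (cases "p x \<ge> q x") (auto intro: mult_left_mono order.trans[OF mult_nonpos_nonneg])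
  qed
  have lo: "(\<Sum>x\<in>A. - (max 0 (q x - p x) * ?M)) \<le> (\<Sum>x\<in>A. (p x - q x) * log b (1 / q x))"
  proof (rule sum_mono)
    fix x assume x: "x \<in> A"
    from logq_bounds[OF x] have l: "0 \<le> log b (1 / q x)" "log b (1 / q x) \<le> ?M" by auto
    show "- (max 0 (q x - p x) * ?M) \<le> (p x - q x) * log b (1 / q x)"
    proof (cases "p x \<ge> q x")
      case True then show ?thesis using l by auto
    next
      case False
      have "(q x - p x) * log b (1 / q x) \<le> (q x - p x) * ?M" using False l by (intro mult_left_mono) auto
      then show ?thesis using False by (simp add: algebra_simps)
    qed
  qed
  have e1: "(\<Sum>x\<in>A. max 0 (p x - q x) * ?M) = TT * ?M"
    by (simp add: TT_def sum_distrib_right)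
  have e2: "(\<Sum>x\<in>A. - (max 0 (q x - p x) * ?M)) = - (TT * ?M)"
    by (simp add: TT_alt sum_distrib_right sum_negf)
  show ?thesis using up lo e1 e2 by (simp add: abs_le_iff algebra_simps)
qed

lemma H_bound: "\<bar>Hf p - Hf q\<bar> \<le> (log b (1 / m) + log b (exp 1) / m) * TT"
proof -
  have "\<bar>Hf p - Hf q\<bar> = \<bar>D1 - (\<Sum>x\<in>A. (p x - q x) * log b (1 / q x))\<bar>"
    using Hdiff by (simp add: abs_minus_commute)
  also have "\<dots> \<le> \<bar>D1\<bar> + \<bar>\<Sum>x\<in>A. (p x - q x) * log b (1 / q x)\<bar>" by (rule abs_triangle_ineq4)
  also have "\<dots> \<le> log b (exp 1) * (TT / m) + log b (1 / m) * TT"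
    using D1_le D1_ge lin_bound by simp
  finally show ?thesis by (simp add: algebra_simps)
qed

lemma m_big_TT0: "m > 1/2 \<Longrightarrow> TT = 0"
proof -
  assume mb: "m > 1/2"
  obtain a where a: "a \<in> A" using Ane by auto
  have "A = {a}"
  proof (rule ccontr)
    assume "A \<noteq> {a}"
    then obtain c where c: "c \<in> A" "c \<noteq> a" using a by auto
    have "q a + q c = sum q {a, c}" using c by simp
    also have "\<dots> \<le> sum q A" using a c fin qpos by (intro sum_mono2) (auto intro: less_imp_le)
    finally show False using mle[OF a] mle[OF c(1)] mb sq by simp
  qed
  then have "p a = 1" "q a = 1" using sp sq by auto
  then show "TT = 0" unfolding TT_def using \<open>A = {a}\<close> by simp
qed

context
  assumes small: "2 * TT\<^sup>2 \<le> m\<^sup>2"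
begin

lemma TT_lt_m: "TT < m"
proof -
  have m2: "m\<^sup>2 > 0" using mpos by simp
  have tt: "TT\<^sup>2 < m\<^sup>2" using small m2 by linarith
  show ?thesis by (rule power_less_imp_less_base[OF tt]) (use mpos in simp)
qed

lemma p_pos: "x \<in> A \<Longrightarrow> p x > 0"
  using dev2[of x] mle[of x] TT_lt_m by fastforce

definition "D2 = (\<Sum>x\<in>A. q x * log b (q x / p x))"

lemma term2: "x \<in> A \<Longrightarrow> q x * log b (q x / p x) \<le> log b (exp 1) * ((q x - p x)\<^sup>2 / p x + (q x - p x))"
proof -
  assume x: "x \<in> A"
  note qx = qpos[OF x] and px = p_pos[OF x]
  have "q x * log b (q x / p x) \<le> q x * (log b (exp 1) * (q x / p x - 1))"
    using logb_le_L[OF b, of "q x / p x"] px qx by (intro mult_left_mono) auto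
  also have "\<dots> = log b (exp 1) * ((q x - p x)\<^sup>2 / p x + (q x - p x))"
    using px by (simp add: field_simps power2_eq_square)
  finally show ?thesis .
qed

lemma chi2: "x \<in> A \<Longrightarrow> (q x - p x)\<^sup>2 / p x \<le> max 0 (q x - p x) * (TT / (m - TT)) + max 0 (p x - q x) * (TT / (m + TT))"
proof -
  assume x: "x \<in> A"
  note qx = qpos[OF x] and px = p_pos[OF x] and d1 = dev1[OF x] and d2 = dev2[OF x] and mq = mle[OF x]
  note tm = TT_lt_m and tn = TT_nn
  show ?thesis
  proof (cases "q x \<ge> p x")
    case True
    have "(q x - p x)\<^sup>2 / p x = (q x - p x) * ((q x - p x) / p x)" by (simp add: power2_eq_square)
    also have "\<dots> \<le> (q x - p x) * (TT / (m - TT))"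
      using True d2 px mq tm tn by (intro mult_left_mono frac_le) auto
    finally show ?thesis using True tm tn by simp
  next
    case False
    have fr: "(p x - q x) / p x \<le> TT / (m + TT)"
    proof -
      have "(p x - q x) * (m + TT) \<le> TT * p x"
      proof -
        have "(p x - q x) * m \<le> TT * q x" using False d1 mq mpos tn
          by (intro mult_mono) auto
        then show ?thesis by (simp add: algebra_simps)
      qed
      then show ?thesis using px mpos tn by (simp add: divide_simps mult.commute)
    qed
    have "(q x - p x)\<^sup>2 / p x = (p x - q x) * ((p x - q x) / p x)" by (simp add: power2_eq_square algebra_simps)
    also have "\<dots> \<le> (p x - q x) * (TT / (m + TT))"
      using False fr by (intro mult_left_mono) auto
    finally show ?thesis using False tm tn by simp
  qed
qed

lemma chisum2: "(\<Sum>x\<in>A. (q x - p x)\<^sup>2 / p x) \<le> (1 / m + 1) * TT"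
proof (cases "m > 1/2")
  case True
  then have t0: "TT = 0" by (rule m_big_TT0)
  have z: "\<forall>x\<in>A. (q x - p x)\<^sup>2 / p x = 0"
    using dev1 dev2 t0 by force
  show ?thesis using sum.neutral[OF z] t0 by simp
next
  case False
  have "(\<Sum>x\<in>A. (q x - p x)\<^sup>2 / p x)
        \<le> (\<Sum>x\<in>A. max 0 (q x - p x) * (TT / (m - TT)) + max 0 (p x - q x) * (TT / (m + TT)))"
    by (rule sum_mono, rule chi2)
  also have "\<dots> = TT * (TT / (m - TT)) + TT * (TT / (m + TT))"
    by (subst sum.distrib, subst (1 2) sum_distrib_right[symmetric]) (simp only: TT_def[symmetric] TT_alt[symmetric])
  also have "\<dots> = TT * (TT / (m - TT) + TT / (m + TT))" by (simp add: algebra_simps)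
  also have "\<dots> \<le> TT * (1 / m + 1)"
    using arith2[OF TT_nn small mpos] False TT_nn by (intro mult_left_mono) auto
  finally show ?thesis by (simp add: algebra_simps)
qed

lemma D2_le: "D2 \<le> log b (exp 1) * ((1 / m + 1) * TT)"
proof -
  have "D2 \<le> (\<Sum>x\<in>A. log b (exp 1) * ((q x - p x)\<^sup>2 / p x + (q x - p x)))"
    unfolding D2_def by (rule sum_mono, rule term2)
  also have "\<dots> = log b (exp 1) * ((\<Sum>x\<in>A. (q x - p x)\<^sup>2 / p x) + (\<Sum>x\<in>A. q x - p x))"
    by (simp add: sum_distrib_left sum.distrib distrib_left)
  also have "(\<Sum>x\<in>A. q x - p x) = 0" using sp sq by (simp add: sum_subtractf)
  finally have "D2 \<le> log b (exp 1) * (\<Sum>x\<in>A. (q x - p x)\<^sup>2 / p x)" by simp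
  also have "\<dots> \<le> log b (exp 1) * ((1 / m + 1) * TT)"
    using chisum2 L_pos by (intro mult_left_mono) auto
  finally show ?thesis .
qed

lemma D2_le': "(\<Sum>x\<in>A. q x * log b (q x / p x)) \<le> log b (exp 1) * ((1 / m + 1) * TT)"
  using D2_le unfolding D2_def .

end

end




lemma ereal_sum_split:
  assumes "finite S"
  shows "enn2ereal (\<integral>\<^sup>+ x. ennreal (f x) \<partial>count_space S) - enn2ereal (\<integral>\<^sup>+ x. ennreal (- f x) \<partial>count_space S)
         = ereal (sum f S)"
proof -
  have a: "(\<integral>\<^sup>+ x. ennreal (g x) \<partial>count_space S) = ennreal (\<Sum>x\<in>S. max 0 (g x))" for g :: "_ \<Rightarrow> real"
  proof -
    have "(\<integral>\<^sup>+ x. ennreal (g x) \<partial>count_space S) = (\<Sum>x\<in>S. ennreal (g x))"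
      using assms by (rule nn_integral_count_space_finite)
    also have "\<dots> = (\<Sum>x\<in>S. ennreal (max 0 (g x)))"
      by (rule sum.cong) (auto simp: ennreal_neg max_def)
    also have "\<dots> = ennreal (\<Sum>x\<in>S. max 0 (g x))"
      by (rule sum_ennreal) auto
    finally show ?thesis .
  qed
  have "(\<Sum>x\<in>S. max 0 (f x)) - (\<Sum>x\<in>S. max 0 (- f x)) = sum f S"
    by (simp add: sum_subtractf[symmetric]) (rule sum.cong, auto)
  moreover have "(\<Sum>x\<in>S. max 0 (f x)) \<ge> 0" "(\<Sum>x\<in>S. max 0 (- f x)) \<ge> 0"
    by (auto intro: sum_nonneg)
  ultimately show ?thesis unfolding a by (simp add: enn2ereal_ennreal)
qed

lemma ereal_sum_nn:
  assumes "finite S" "\<And>x. x \<in> S \<Longrightarrow> f x \<ge> 0"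
  shows "enn2ereal (\<integral>\<^sup>+ x. ennreal (f x) \<partial>count_space S) = ereal (sum f S)"
proof -
  have "(\<integral>\<^sup>+ x. ennreal (f x) \<partial>count_space S) = (\<Sum>x\<in>S. ennreal (f x))"
    using assms by (intro nn_integral_count_space_finite)
  also have "\<dots> = ennreal (sum f S)"
    using assms by (intro sum_ennreal) auto
  finally show ?thesis using assms by (simp add: enn2ereal_ennreal sum_nonneg)
qed

lemma entropy_eq:
  fixes p :: "'a pmf"
  assumes "b > 1" "finite A" "set_pmf p \<subseteq> A"
  shows "entropy b p = ereal (\<Sum>x\<in>A. - pmf p x * log b (pmf p x))"
proof -
  have fin: "finite (set_pmf p)" using assms finite_subset by blast
  have "entropy b p = ereal (\<Sum>x\<in>set_pmf p. - pmf p x * log b (pmf p x))"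
    unfolding entropy_def
  proof (rule ereal_sum_nn[OF fin])
    fix x assume x: "x \<in> set_pmf p"
    have px: "pmf p x > 0" using x by (simp add: set_pmf_iff less_le)
    have "pmf p x \<le> 1" by (rule pmf_le_1)
    then have "log b (pmf p x) \<le> 0" using assms(1) px by simp
    then show "0 \<le> - pmf p x * log b (pmf p x)" using px
      by (simp add: mult_nonneg_nonpos)
  qed
  also have "(\<Sum>x\<in>set_pmf p. - pmf p x * log b (pmf p x)) = (\<Sum>x\<in>A. - pmf p x * log b (pmf p x))"
  proof (rule sum.mono_neutral_left[OF assms(2) assms(3)])
    show "\<forall>x\<in>A - set_pmf p. - pmf p x * log b (pmf p x) = 0" by (simp add: set_pmf_iff)
  qed
  finally show ?thesis .
qed

lemma idiv_eq:
  fixes p q :: "'a pmf"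
  assumes "finite A" "set_pmf p \<subseteq> set_pmf q" "set_pmf q \<subseteq> A"
  shows "idiv b p q = ereal (\<Sum>x\<in>A. pmf p x * log b (pmf p x / pmf q x))"
proof -
  have sub: "set_pmf p \<subseteq> A" using assms(2,3) by (rule order.trans)
  have fin: "finite (set_pmf p)" by (rule finite_subset[OF sub assms(1)])
  have "idiv b p q = ereal (\<Sum>x\<in>set_pmf p. pmf p x * log b (pmf p x / pmf q x))"
    unfolding idiv_def if_P[OF assms(2)] by (rule ereal_sum_split[OF fin])
  also have "(\<Sum>x\<in>set_pmf p. pmf p x * log b (pmf p x / pmf q x)) = (\<Sum>x\<in>A. pmf p x * log b (pmf p x / pmf q x))"
  proof (rule sum.mono_neutral_left[OF assms(1)])
    show "set_pmf p \<subseteq> A" by (rule sub)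
    show "\<forall>x\<in>A - set_pmf p. pmf p x * log b (pmf p x / pmf q x) = 0" by (simp add: set_pmf_iff)
  qed
  finally show ?thesis .
qed




lemma iid_prod: "product_prob_space (\<lambda>_::nat. measure_pmf \<mu>)"
  by unfold_locales

lemma prob_space_iid: "prob_space (iid_seq \<mu>)"
  unfolding iid_seq_def by (rule prob_space_PiM) (rule measure_pmf.prob_space_axioms)

lemma space_iid: "space (iid_seq \<mu>) = UNIV"
  by (simp add: iid_seq_def space_PiM)

lemma AE_supp: "AE \<omega> in iid_seq \<mu>. \<forall>k. \<omega> k \<in> set_pmf \<mu>"
proof -
  interpret P: product_prob_space "\<lambda>_::nat. measure_pmf \<mu>" UNIV by (rule iid_prod)
  have "\<forall>k. AE \<omega> in iid_seq \<mu>. \<omega> k \<in> set_pmf \<mu>"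
    unfolding iid_seq_def by (intro allI P.AE_component) (auto simp: AE_measure_pmf)
  then show ?thesis by (simp add: AE_all_countable)
qed

lemma AE_hit:
  assumes "x \<in> set_pmf \<mu>"
  shows "AE \<omega> in iid_seq \<mu>. \<exists>k. \<omega> k = x"
proof -
  interpret P: prob_space "iid_seq \<mu>" by (rule prob_space_iid)
  define Z where "Z = {\<omega>::nat \<Rightarrow> _. \<forall>k. \<omega> k \<noteq> x}"
  define c where "c = 1 - pmf \<mu> x"
  have c: "0 \<le> c" "c < 1" using assms pmf_le_1[of \<mu> x] by (auto simp: c_def set_pmf_iff pmf_pos)
  have ZN: "Z \<in> sets (iid_seq \<mu>)"
  proof -
    have "Z = (\<Inter>k. {\<omega>\<in>space (iid_seq \<mu>). \<omega> k \<in> UNIV - {x}})" by (auto simp: Z_def space_iid)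
    also have "\<dots> \<in> sets (iid_seq \<mu>)"
      unfolding iid_seq_def by (intro sets.countable_INT' measurable_sets[OF measurable_component_singleton]) auto
    finally show ?thesis .
  qed
  have bound: "P.prob Z \<le> c ^ N" for N
  proof -
    define E where "E = prod_emb UNIV (\<lambda>_::nat. measure_pmf \<mu>) {..<N} (PiE {..<N} (\<lambda>_. UNIV - {x}))"
    have ZE: "Z \<subseteq> E" by (auto simp: Z_def E_def prod_emb_def PiE_def extensional_def)
    have "emeasure (iid_seq \<mu>) E = (\<Prod>i\<in>{..<N}. emeasure (measure_pmf \<mu>) (UNIV - {x}))"
      unfolding iid_seq_def E_def
      by (rule emeasure_PiM_emb) (auto intro: measure_pmf.prob_space_axioms)
    also have "emeasure (measure_pmf \<mu>) (UNIV - {x}) = ennreal c"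
      using measure_pmf.prob_compl[of "{x}" \<mu>]
      by (simp add: measure_pmf.emeasure_eq_measure c_def measure_pmf_single)
    finally have "emeasure (iid_seq \<mu>) E = ennreal (c ^ N)" using c by (simp add: ennreal_power)
    then have "P.prob E = c ^ N" using c by (simp add: P.emeasure_eq_measure)
    moreover have "E \<in> sets (iid_seq \<mu>)"
      unfolding E_def iid_seq_def by (intro measurable_prod_emb sets_PiM_I_finite) auto
    ultimately show ?thesis using P.finite_measure_mono[OF ZE] by simp
  qed
  have "(\<lambda>N. c ^ N) \<longlonglongrightarrow> 0" using c by (intro LIMSEQ_power_zero) simp
  then have "P.prob Z \<le> 0" using bound by (intro LIMSEQ_le_const) auto
  then have "emeasure (iid_seq \<mu>) Z = 0" using ZN measure_nonneg[of "iid_seq \<mu>" Z] by (simp add: P.emeasure_eq_measure)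
  then show ?thesis
    by (intro AE_I[OF _ _ ZN]) (auto simp: Z_def)
qed




lemma supp_iid: "\<omega> \<in> set_pmf (iid_n n \<mu>) \<Longrightarrow> k < n \<Longrightarrow> \<omega> k \<in> set_pmf \<mu>"
  by (auto simp: iid_n_def set_Pi_pmf PiE_dflt_def)

lemma prob_mono_supp:
  assumes "\<And>\<omega>. \<omega> \<in> set_pmf M \<Longrightarrow> \<omega> \<in> S \<Longrightarrow> \<omega> \<in> S'"
  shows "measure_pmf.prob M S \<le> measure_pmf.prob M S'"
proof -
  have "measure_pmf.prob M S = measure_pmf.prob M (S \<inter> set_pmf M)"
    by (simp add: measure_Int_set_pmf)
  also have "\<dots> \<le> measure_pmf.prob M S'"
    by (rule measure_pmf.finite_measure_mono) (use assms in auto)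
  finally show ?thesis .
qed

lemma min_mass_facts:
  fixes \<mu> :: "'a pmf"
  assumes "finite (set_pmf \<mu>)"
  shows "min_mass \<mu> > 0" "\<And>x. x \<in> set_pmf \<mu> \<Longrightarrow> min_mass \<mu> \<le> pmf \<mu> x" "min_mass \<mu> \<le> 1"
proof -
  have ne: "pmf \<mu> ` set_pmf \<mu> \<noteq> {}" by (simp add: set_pmf_not_empty)
  have fi: "finite (pmf \<mu> ` set_pmf \<mu>)" using assms by simp
  have "min_mass \<mu> \<in> pmf \<mu> ` set_pmf \<mu>" unfolding min_mass_def by (rule Min_in[OF fi ne])
  then show "min_mass \<mu> > 0" "min_mass \<mu> \<le> 1" by (auto simp: set_pmf_iff less_le pmf_le_1)
  show "\<And>x. x \<in> set_pmf \<mu> \<Longrightarrow> min_mass \<mu> \<le> pmf \<mu> x"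
    unfolding min_mass_def using fi by (intro Min_le) auto
qed

lemma set_emp_sub:
  assumes "n > 0" "\<omega> \<in> set_pmf (iid_n n \<mu>)"
  shows "set_pmf (empirical n \<omega>) \<subseteq> set_pmf \<mu>"
  using assms by (auto simp: set_pmf_empirical supp_iid)

lemma det_inst:
  fixes \<mu> :: "'a pmf"
  assumes "n > 0" "\<omega> \<in> set_pmf (iid_n n \<mu>)" "finite (set_pmf \<mu>)" "b > 1"
  shows "det (set_pmf \<mu>) (pmf (empirical n \<omega>)) (pmf \<mu>) (min_mass \<mu>) b"
proof
  show "finite (set_pmf \<mu>)" by fact
  show "\<And>x. x \<in> set_pmf \<mu> \<Longrightarrow> 0 < pmf \<mu> x" by (simp add: set_pmf_iff less_le)
  show "sum (pmf \<mu>) (set_pmf \<mu>) = 1" using assms(3) by (rule sum_pmf_eq_1) simp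
  show "\<And>x. 0 \<le> pmf (empirical n \<omega>) x" by simp
  show "sum (pmf (empirical n \<omega>)) (set_pmf \<mu>) = 1"
    using assms(3) set_emp_sub[OF assms(1,2)] by (rule sum_pmf_eq_1)
  show "\<And>x. x \<in> set_pmf \<mu> \<Longrightarrow> min_mass \<mu> \<le> pmf \<mu> x" using min_mass_facts[OF assms(3)] by auto
  show "0 < min_mass \<mu>" using min_mass_facts[OF assms(3)] by auto
  show "1 < b" by fact
qed

lemma exp_eq_aux: "exp (- 2 * real n * (e * m / L)\<^sup>2) = exp (- (2 * m\<^sup>2 * real n * e\<^sup>2) / L\<^sup>2)"
  by (simp add: power_divide power_mult_distrib)

lemma bound1:
  fixes \<mu> :: "'a pmf"
  assumes fin: "finite (set_pmf \<mu>)" and b: "b > 1" and n: "n \<ge> 1" and e: "\<epsilon> > 0"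
  shows "measure_pmf.prob (iid_n n \<mu>) {\<omega>. idiv b (empirical n \<omega>) \<mu> > ereal \<epsilon>}
           \<le> 2 ^ (card (set_pmf \<mu>) + 1) *
              exp (- (2 * (min_mass \<mu>)\<^sup>2 * real n * \<epsilon>\<^sup>2) / (log b (exp 1))\<^sup>2)"
proof -
  define m where "m = min_mass \<mu>"
  define L where "L = log b (exp 1)"
  define \<delta> where "\<delta> = \<epsilon> * m / L"
  have Lpos: "L > 0" using b by (simp add: L_def)
  have mpos: "m > 0" using min_mass_facts[OF fin] by (simp add: m_def)
  have d0: "\<delta> \<ge> 0" using Lpos mpos e by (simp add: \<delta>_def)
  have n0: "n > 0" using n by simp
  have "measure_pmf.prob (iid_n n \<mu>) {\<omega>. idiv b (empirical n \<omega>) \<mu> > ereal \<epsilon>}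
        \<le> measure_pmf.prob (iid_n n \<mu>) {\<omega>. (\<Sum>x\<in>set_pmf \<mu>. max 0 (pmf (empirical n \<omega>) x - pmf \<mu> x)) > \<delta>}"
  proof (rule prob_mono_supp)
    fix \<omega> assume w: "\<omega> \<in> set_pmf (iid_n n \<mu>)" and "\<omega> \<in> {\<omega>. idiv b (empirical n \<omega>) \<mu> > ereal \<epsilon>}"
    then have gt: "idiv b (empirical n \<omega>) \<mu> > ereal \<epsilon>" by simp
    interpret det "set_pmf \<mu>" "pmf (empirical n \<omega>)" "pmf \<mu>" m b
      unfolding m_def by (rule det_inst[OF n0 w fin b])
    have "idiv b (empirical n \<omega>) \<mu> = ereal D1"
      unfolding D1_def by (rule idiv_eq[OF fin set_emp_sub[OF n0 w] order.refl])
    with gt have "\<epsilon> < D1" by simp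
    also have "D1 \<le> L * (TT / m)" using D1_le by (simp add: L_def)
    finally have "\<epsilon> * m / L < TT" using Lpos mpos by (simp add: field_simps)
    then show "\<omega> \<in> {\<omega>. (\<Sum>x\<in>set_pmf \<mu>. max 0 (pmf (empirical n \<omega>) x - pmf \<mu> x)) > \<delta>}"
      by (simp add: \<delta>_def TT_def)
  qed
  also have "\<dots> \<le> 2 ^ card (set_pmf \<mu>) * exp (- 2 * real n * \<delta>\<^sup>2)"
    by (rule union_bound[OF fin n0 d0])
  also have "exp (- 2 * real n * \<delta>\<^sup>2) = exp (- (2 * m\<^sup>2 * real n * \<epsilon>\<^sup>2) / L\<^sup>2)"
    unfolding \<delta>_def by (rule exp_eq_aux)
  also have "2 ^ card (set_pmf \<mu>) * exp (- (2 * m\<^sup>2 * real n * \<epsilon>\<^sup>2) / L\<^sup>2)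
             \<le> 2 ^ (card (set_pmf \<mu>) + 1) * exp (- (2 * m\<^sup>2 * real n * \<epsilon>\<^sup>2) / L\<^sup>2)"
    by (intro mult_right_mono) auto
  finally show ?thesis by (simp add: m_def L_def)
qed

lemma exp_eq_aux2: "exp (- 2 * real n * (e / C)\<^sup>2) = exp (- (2 * real n * e\<^sup>2) / C\<^sup>2)"
  by (simp add: power_divide)

lemma bound2:
  fixes \<mu> :: "'a pmf"
  assumes fin: "finite (set_pmf \<mu>)" and b: "b > 1" and n: "n \<ge> 1" and e: "\<epsilon> > 0"
  shows "measure_pmf.prob (iid_n n \<mu>)
             {\<omega>. \<bar>entropy b (empirical n \<omega>) - entropy b \<mu>\<bar> > ereal \<epsilon>}
           \<le> 2 ^ (card (set_pmf \<mu>) + 1) *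
              exp (- (2 * real n * \<epsilon>\<^sup>2) /
                     (Max_log b \<mu> + log b (exp 1) / min_mass \<mu>)\<^sup>2)"
proof -
  define m where "m = min_mass \<mu>"
  define L where "L = log b (exp 1)"
  define C where "C = Max_log b \<mu> + L / m"
  define \<delta> where "\<delta> = \<epsilon> / C"
  have Lpos: "L > 0" using b by (simp add: L_def)
  have mpos: "m > 0" and m1: "m \<le> 1" using min_mass_facts[OF fin] by (auto simp: m_def)
  have "1 \<le> 1 / m" using mpos m1 by simp
  then have M0: "Max_log b \<mu> \<ge> 0" using b mpos
    unfolding Max_log_def m_def[symmetric] by (subst zero_le_log_cancel_iff) auto
  have "L / m > 0" using Lpos mpos by simp
  then have Cpos: "C > 0" using M0 unfolding C_def by linarith
  have d0: "\<delta> \<ge> 0" using Cpos e by (simp add: \<delta>_def)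
  have n0: "n > 0" using n by simp
  have "measure_pmf.prob (iid_n n \<mu>) {\<omega>. \<bar>entropy b (empirical n \<omega>) - entropy b \<mu>\<bar> > ereal \<epsilon>}
        \<le> measure_pmf.prob (iid_n n \<mu>) {\<omega>. (\<Sum>x\<in>set_pmf \<mu>. max 0 (pmf (empirical n \<omega>) x - pmf \<mu> x)) > \<delta>}"
  proof (rule prob_mono_supp)
    fix \<omega> assume w: "\<omega> \<in> set_pmf (iid_n n \<mu>)"
      and "\<omega> \<in> {\<omega>. \<bar>entropy b (empirical n \<omega>) - entropy b \<mu>\<bar> > ereal \<epsilon>}"
    then have gt: "\<bar>entropy b (empirical n \<omega>) - entropy b \<mu>\<bar> > ereal \<epsilon>" by simp
    interpret det "set_pmf \<mu>" "pmf (empirical n \<omega>)" "pmf \<mu>" m b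
      unfolding m_def by (rule det_inst[OF n0 w fin b])
    have "entropy b (empirical n \<omega>) = ereal (Hf (pmf (empirical n \<omega>)))"
      unfolding Hf_def by (rule entropy_eq[OF b fin set_emp_sub[OF n0 w]])
    moreover have "entropy b \<mu> = ereal (Hf (pmf \<mu>))"
      unfolding Hf_def by (rule entropy_eq[OF b fin order.refl])
    ultimately have "\<epsilon> < \<bar>Hf (pmf (empirical n \<omega>)) - Hf (pmf \<mu>)\<bar>" using gt by simp
    also have "\<dots> \<le> C * TT" using H_bound by (simp add: C_def L_def Max_log_def m_def)
    finally have "\<epsilon> / C < TT" using Cpos by (simp add: field_simps)
    then show "\<omega> \<in> {\<omega>. (\<Sum>x\<in>set_pmf \<mu>. max 0 (pmf (empirical n \<omega>) x - pmf \<mu> x)) > \<delta>}"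
      by (simp add: \<delta>_def TT_def)
  qed
  also have "\<dots> \<le> 2 ^ card (set_pmf \<mu>) * exp (- 2 * real n * \<delta>\<^sup>2)"
    by (rule union_bound[OF fin n0 d0])
  also have "exp (- 2 * real n * \<delta>\<^sup>2) = exp (- (2 * real n * \<epsilon>\<^sup>2) / C\<^sup>2)"
    unfolding \<delta>_def by (rule exp_eq_aux2)
  also have "2 ^ card (set_pmf \<mu>) * exp (- (2 * real n * \<epsilon>\<^sup>2) / C\<^sup>2)
             \<le> 2 ^ (card (set_pmf \<mu>) + 1) * exp (- (2 * real n * \<epsilon>\<^sup>2) / C\<^sup>2)"
    by (intro mult_right_mono) auto
  finally show ?thesis by (simp add: m_def L_def C_def)
qed

lemma exp_eq_aux3: "exp (- 2 * real n * (e / (L * K))\<^sup>2) = exp (- (2 * real n * e\<^sup>2) / (L\<^sup>2 * K\<^sup>2))"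
  by (simp add: power_divide power_mult_distrib)

lemma exp_eq_aux4: "exp (- 2 * real n * (m / sqrt 2)\<^sup>2) = exp (- real n * m\<^sup>2)"
  by (simp add: power_divide)

lemma bound3:
  fixes \<mu> :: "'a pmf"
  assumes fin: "finite (set_pmf \<mu>)" and b: "b > 1" and n: "n \<ge> 1" and e: "\<epsilon> > 0"
  shows "measure_pmf.prob (iid_n n \<mu>) {\<omega>. idiv b \<mu> (empirical n \<omega>) > ereal \<epsilon>}
           \<le> 2 ^ (card (set_pmf \<mu>) + 1) *
              (exp (- (2 * real n * \<epsilon>\<^sup>2) /
                      ((log b (exp 1))\<^sup>2 * (1 / min_mass \<mu> + 1)\<^sup>2))
               + exp (- real n * (min_mass \<mu>)\<^sup>2))"
proof -
  define m where "m = min_mass \<mu>"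
  define L where "L = log b (exp 1)"
  define K where "K = 1 / m + 1"
  define \<delta> where "\<delta> = \<epsilon> / (L * K)"
  define \<delta>' where "\<delta>' = m / sqrt 2"
  define T where "T = (\<lambda>\<omega>. \<Sum>x\<in>set_pmf \<mu>. max 0 (pmf (empirical n \<omega>) x - pmf \<mu> x))"
  have Lpos: "L > 0" using b by (simp add: L_def)
  have mpos: "m > 0" using min_mass_facts[OF fin] by (simp add: m_def)
  have Kpos: "K > 0" using mpos by (simp add: K_def add_pos_pos)
  have d0: "\<delta> \<ge> 0" using Lpos Kpos e by (simp add: \<delta>_def)
  have d0': "\<delta>' \<ge> 0" using mpos by (simp add: \<delta>'_def)
  have n0: "n > 0" using n by simp
  have "measure_pmf.prob (iid_n n \<mu>) {\<omega>. idiv b \<mu> (empirical n \<omega>) > ereal \<epsilon>}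
        \<le> measure_pmf.prob (iid_n n \<mu>) ({\<omega>. T \<omega> > \<delta>} \<union> {\<omega>. T \<omega> > \<delta>'})"
  proof (rule prob_mono_supp)
    fix \<omega> assume w: "\<omega> \<in> set_pmf (iid_n n \<mu>)" and "\<omega> \<in> {\<omega>. idiv b \<mu> (empirical n \<omega>) > ereal \<epsilon>}"
    then have gt: "idiv b \<mu> (empirical n \<omega>) > ereal \<epsilon>" by simp
    interpret det "set_pmf \<mu>" "pmf (empirical n \<omega>)" "pmf \<mu>" m b
      unfolding m_def by (rule det_inst[OF n0 w fin b])
    have TT: "T \<omega> = TT" by (simp add: T_def TT_def)
    show "\<omega> \<in> {\<omega>. T \<omega> > \<delta>} \<union> {\<omega>. T \<omega> > \<delta>'}"
    proof (cases "2 * TT\<^sup>2 \<le> m\<^sup>2")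
      case True
      have sub1: "set_pmf \<mu> \<subseteq> set_pmf (empirical n \<omega>)"
        using p_pos[OF True] by (force simp: set_pmf_iff)
      have "idiv b \<mu> (empirical n \<omega>) = ereal (\<Sum>x\<in>set_pmf \<mu>. pmf \<mu> x * log b (pmf \<mu> x / pmf (empirical n \<omega>) x))"
        by (rule idiv_eq[OF fin sub1 set_emp_sub[OF n0 w]])
      with gt have "\<epsilon> < (\<Sum>x\<in>set_pmf \<mu>. pmf \<mu> x * log b (pmf \<mu> x / pmf (empirical n \<omega>) x))" by simp
      also have "\<dots> \<le> L * (K * TT)" using D2_le'[OF True] by (simp add: L_def K_def)
      finally have "\<epsilon> / (L * K) < TT" using Lpos Kpos by (simp add: field_simps)
      then show ?thesis using TT by (simp add: \<delta>_def)
    next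
      case False
      then have "\<delta>'\<^sup>2 < TT\<^sup>2" by (simp add: \<delta>'_def power_divide)
      then have "\<delta>' < TT" by (rule power_less_imp_less_base) (rule TT_nn)
      then show ?thesis using TT by simp
    qed
  qed
  also have "\<dots> \<le> measure_pmf.prob (iid_n n \<mu>) {\<omega>. T \<omega> > \<delta>} + measure_pmf.prob (iid_n n \<mu>) {\<omega>. T \<omega> > \<delta>'}"
    by (rule measure_Un_le) auto
  also have "\<dots> \<le> 2 ^ card (set_pmf \<mu>) * exp (- 2 * real n * \<delta>\<^sup>2) + 2 ^ card (set_pmf \<mu>) * exp (- 2 * real n * \<delta>'\<^sup>2)"
    unfolding T_def by (intro add_mono union_bound[OF fin n0 d0] union_bound[OF fin n0 d0'])
  also have "exp (- 2 * real n * \<delta>\<^sup>2) = exp (- (2 * real n * \<epsilon>\<^sup>2) / (L\<^sup>2 * K\<^sup>2))"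
    unfolding \<delta>_def by (rule exp_eq_aux3)
  also have "exp (- 2 * real n * \<delta>'\<^sup>2) = exp (- real n * m\<^sup>2)"
    unfolding \<delta>'_def by (rule exp_eq_aux4)
  also have "2 ^ card (set_pmf \<mu>) * exp (- (2 * real n * \<epsilon>\<^sup>2) / (L\<^sup>2 * K\<^sup>2)) + 2 ^ card (set_pmf \<mu>) * exp (- real n * m\<^sup>2)
     \<le> 2 ^ (card (set_pmf \<mu>) + 1) * (exp (- (2 * real n * \<epsilon>\<^sup>2) / (L\<^sup>2 * K\<^sup>2)) + exp (- real n * m\<^sup>2))"
    by (simp add: distrib_left)
  finally show ?thesis by (simp add: m_def L_def K_def)
qed

lemma AE_part1:
  fixes \<mu> :: "'a pmf"
  assumes fin: "finite (set_pmf \<mu>)" and b: "b > 1"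
  shows "AE \<omega> in iid_seq \<mu>. \<forall>n\<ge>1.
           set_pmf (empirical n \<omega>) \<subseteq> set_pmf \<mu> \<and>
           entropy b (empirical n \<omega>) < \<infinity> \<and> idiv b (empirical n \<omega>) \<mu> < \<infinity>"
  using AE_supp[of \<mu>]
proof (rule eventually_mono)
  fix \<omega> :: "nat \<Rightarrow> 'a" assume w: "\<forall>k. \<omega> k \<in> set_pmf \<mu>"
  show "\<forall>n\<ge>1. set_pmf (empirical n \<omega>) \<subseteq> set_pmf \<mu> \<and>
           entropy b (empirical n \<omega>) < \<infinity> \<and> idiv b (empirical n \<omega>) \<mu> < \<infinity>"
  proof (intro allI impI conjI)
    fix n :: nat assume "n \<ge> 1"
    then have n0: "n > 0" by simp
    show sub: "set_pmf (empirical n \<omega>) \<subseteq> set_pmf \<mu>"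
      using w by (auto simp: set_pmf_empirical[OF n0])
    show "entropy b (empirical n \<omega>) < \<infinity>"
      by (simp add: entropy_eq[OF b fin sub])
    show "idiv b (empirical n \<omega>) \<mu> < \<infinity>"
      by (simp add: idiv_eq[OF fin sub order.refl])
  qed
qed

lemma AE_part5:
  fixes \<mu> :: "'a pmf"
  assumes fin: "finite (set_pmf \<mu>)"
  shows "AE \<omega> in iid_seq \<mu>. eventually (\<lambda>n. idiv b \<mu> (empirical n \<omega>) < \<infinity>) sequentially"
proof -
  have "AE \<omega> in iid_seq \<mu>. \<forall>x\<in>set_pmf \<mu>. \<exists>k. \<omega> k = x"
    by (rule AE_finite_allI[OF fin]) (rule AE_hit)
  then show ?thesis
  proof (rule eventually_mono)
    fix \<omega> :: "nat \<Rightarrow> 'a" assume w: "\<forall>x\<in>set_pmf \<mu>. \<exists>k. \<omega> k = x"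
    have "\<forall>x\<in>set_pmf \<mu>. eventually (\<lambda>n. x \<in> \<omega> ` {..<n}) sequentially"
    proof
      fix x assume "x \<in> set_pmf \<mu>"
      then obtain k where k: "\<omega> k = x" using w by blast
      show "eventually (\<lambda>n. x \<in> \<omega> ` {..<n}) sequentially"
        using eventually_gt_at_top[of k] by (rule eventually_mono) (use k in auto)
    qed
    then have "eventually (\<lambda>n. \<forall>x\<in>set_pmf \<mu>. x \<in> \<omega> ` {..<n}) sequentially"
      by (rule eventually_ball_finite[OF fin])
    then have "eventually (\<lambda>n. n > 0 \<and> (\<forall>x\<in>set_pmf \<mu>. x \<in> \<omega> ` {..<n})) sequentially"
      using eventually_gt_at_top[of 0] by eventually_elim auto
    then show "eventually (\<lambda>n. idiv b \<mu> (empirical n \<omega>) < \<infinity>) sequentially"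
    proof (rule eventually_mono)
      fix n assume h: "n > 0 \<and> (\<forall>x\<in>set_pmf \<mu>. x \<in> \<omega> ` {..<n})"
      then have sub: "set_pmf \<mu> \<subseteq> set_pmf (empirical n \<omega>)"
        by (auto simp: set_pmf_empirical)
      have f: "finite (set_pmf (empirical n \<omega>))" using h by (simp add: set_pmf_empirical)
      show "idiv b \<mu> (empirical n \<omega>) < \<infinity>"
        by (simp add: idiv_eq[OF f sub order.refl])
    qed
  qed
qed


theorem theorem1:
  fixes b :: real and \<mu> :: "'a::countable pmf"
  assumes "infinite (UNIV :: 'a set)" and "b > 1" and "finite (set_pmf \<mu>)"
  shows "(AE \<omega> in iid_seq \<mu>. \<forall>n\<ge>1.
           set_pmf (empirical n \<omega>) \<subseteq> set_pmf \<mu> \<and>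
           entropy b (empirical n \<omega>) < \<infinity> \<and> idiv b (empirical n \<omega>) \<mu> < \<infinity>) \<and>
        (\<forall>n\<ge>1. \<forall>\<epsilon>>0.
           measure_pmf.prob (iid_n n \<mu>) {\<omega>. idiv b (empirical n \<omega>) \<mu> > ereal \<epsilon>}
           \<le> 2 ^ (card (set_pmf \<mu>) + 1) *
              exp (- (2 * (min_mass \<mu>)\<^sup>2 * real n * \<epsilon>\<^sup>2) / (log b (exp 1))\<^sup>2)) \<and>
        (\<forall>n\<ge>1. \<forall>\<epsilon>>0.
           measure_pmf.prob (iid_n n \<mu>)
             {\<omega>. \<bar>entropy b (empirical n \<omega>) - entropy b \<mu>\<bar> > ereal \<epsilon>}
           \<le> 2 ^ (card (set_pmf \<mu>) + 1) *
              exp (- (2 * real n * \<epsilon>\<^sup>2) /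
                     (Max_log b \<mu> + log b (exp 1) / min_mass \<mu>)\<^sup>2)) \<and>
        (\<forall>n\<ge>1. \<forall>\<epsilon>>0.
           measure_pmf.prob (iid_n n \<mu>) {\<omega>. idiv b \<mu> (empirical n \<omega>) > ereal \<epsilon>}
           \<le> 2 ^ (card (set_pmf \<mu>) + 1) *
              (exp (- (2 * real n * \<epsilon>\<^sup>2) /
                      ((log b (exp 1))\<^sup>2 * (1 / min_mass \<mu> + 1)\<^sup>2))
               + exp (- real n * (min_mass \<mu>)\<^sup>2))) \<and>
        (AE \<omega> in iid_seq \<mu>. eventually (\<lambda>n. idiv b \<mu> (empirical n \<omega>) < \<infinity>) sequentially)"
    using AE_part1[OF assms(3,2)] bound1[OF assms(3,2)] bound2[OF assms(3,2)] bound3[OF assms(3,2)]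
    AE_part5[OF assms(3)] by blast

end
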